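(* Let $n\ge 2$ and let $\dot{\mathbf x}=\mathbf f(\sigma,\mathbf x)$ be a multistable regulatory system (MSRS) as defined in the context, with $f_k(\sigma,\mathbf x)=-l(x_k)+\sigma\frac{g(x_k)}{P(x_1,\dots,x_n)+h(x_k)}$; fix $\sigma>0$. Let $\mathbf r\in\mathbb R_{>0}^n$ be a non-diagonal equilibrium (i.e. not all coordinates equal) whose coordinates take the value $p$ exactly $i$ times and the value $q\ne p$ exactly $n-i$ times, where $1\le i\le\lfloor n/2\rfloor$. Let $\boldsymbol\rho=(p,\dots,p,q,\dots,q)$ be the point with $p$ in the first $i$ coordinates and $q$ in the last $n-i$ coordinates. For $k=1,\dots,n$ let $D_k(\mathbf x)=-\frac{P(\mathbf x)+h(x_k)}{l(x_k)}$, and set $$\beta=\frac{\partial f_1}{\partial x_1}(\boldsymbol\rho),\ \tau=\frac{\partial f_n}{\partial x_n}(\boldsymbol\rho),\ \gamma=\frac{\frac{\partial P}{\partial x_2}(\boldsymbol\rho)}{D_1(\boldsymbol\rho)},\ \xi=\frac{\frac{\partial P}{\partial x_{n-1}}(\boldsymbol\rho)}{D_n(\boldsymbol\rho)},\ \mu=\frac{\frac{\partial P}{\partial x_n}(\boldsymbol\rho)}{D_1(\boldsymbol\rho)},\ \nu=\frac{\frac{\partial P}{\partial x_1}(\boldsymbol\rho)}{D_n(\boldsymbol\rho)},$$ $$G_1=\tau-\xi,\quad G_2=\beta-\gamma,\quad G_3=\beta+\tau+(i-1)\gamma+(n-i-1)\xi,$$ $$G_4=\big(\beta+(i-1)\gamma\big)\big(\tau+(n-i-1)\xi\big)-i(n-i)\mu\nu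 .$$ Then $\det\left(\lambda I-J_{\mathbf f}(\mathbf r)\right)=(\lambda-G_1)^{n-i-1}(\lambda-G_2)^{i-1}\left(\lambda^2-G_3\lambda+G_4\right)$, where $J_{\mathbf f}=\left[\frac{\partial f_i}{\partial x_j}\right]$ is the Jacobian matrix with respect to $\mathbf x$.
   Context: A system of ODEs $\frac{dx_k}{dt}=f_k(\sigma,x_1,\dots,x_n)$, $k=1,\dots,n$, is called a multistable regulatory system (MSRS) if $f_k(\sigma,x_1,\dots,x_n)=-l(x_k)+\sigma\frac{g(x_k)}{P(x_1,\dots,x_n)+h(x_k)}$, where $l,g,h$ are real functions of one real variable and $P$ is a real function of $n$ real variables (all differentiable), and: (1) $\sigma$ is a positive parameter; (2) $P$ is symmetric, i.e. unchanged under interchanging any two of its arguments; (3) for every $k$ and every $(x_1,\dots,x_n)\in\mathbb R_{>0}^n$, $P(x_1,\dots,x_n)+h(x_k)>0$; (4) $l(z)\neq 0$ and for every $\sigma>0$ the function $z\mapsto \sigma\frac{g(z)}{l(z)}-h(z)$ has at most one extreme point for $z\in\mathbb R_{>0}$. For a given $\sigma$, a point $\mathbf r\in\mathbb R_{>0}^n$ is an equilibrium if $f_1(\sigma,\mathbf r)=\dots=f_n(\sigma,\mathbf r)=0$. *)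

theory Defs
  imports "HOL-Analysis.Analysis" "Jordan_Normal_Form.Determinant"
begin

text \<open>Points of R^n are represented as vectors x of dimension n (Jordan_Normal_Form vec),
coordinates x_1..x_n being x $ 0 .. x $ (n-1).\<close>

definition partial_vec :: "(real vec \<Rightarrow> real) \<Rightarrow> nat \<Rightarrow> real vec \<Rightarrow> real" where
  "partial_vec F j x = deriv (\<lambda>t. F (vec (dim_vec x) (\<lambda>m. if m = j then t else x $ m))) (x $ j)"

definition partial_differentiable :: "(real vec \<Rightarrow> real) \<Rightarrow> nat \<Rightarrow> real vec \<Rightarrow> bool" where
  "partial_differentiable F j x \<longleftrightarrow>
     (\<lambda>t. F (vec (dim_vec x) (\<lambda>m. if m = j then t else x $ m))) differentiable (at (x $ j))"

definition jacobian :: "nat \<Rightarrow> (nat \<Rightarrow> real vec \<Rightarrow> real) \<Rightarrow> real vec \<Rightarrow> real mat" where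
  "jacobian n F x = mat n n (\<lambda>(a, b). partial_vec (F a) b x)"

definition msrs_f :: "(real \<Rightarrow> real) \<Rightarrow> (real \<Rightarrow> real) \<Rightarrow> (real \<Rightarrow> real) \<Rightarrow> (real vec \<Rightarrow> real)
    \<Rightarrow> real \<Rightarrow> nat \<Rightarrow> real vec \<Rightarrow> real" where
  "msrs_f l g h P \<sigma> k x = - l (x $ k) + \<sigma> * g (x $ k) / (P x + h (x $ k))"

definition pos_vec :: "nat \<Rightarrow> real vec set" where
  "pos_vec n = {x \<in> carrier_vec n. \<forall>k<n. x $ k > 0}"

definition extreme_point_on :: "real set \<Rightarrow> (real \<Rightarrow> real) \<Rightarrow> real \<Rightarrow> bool" where
  "extreme_point_on S \<phi> z \<longleftrightarrow> z \<in> S \<and> (\<exists>e>0.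
      (\<forall>y\<in>S. \<bar>y - z\<bar> < e \<longrightarrow> \<phi> y \<le> \<phi> z) \<or> (\<forall>y\<in>S. \<bar>y - z\<bar> < e \<longrightarrow> \<phi> z \<le> \<phi> y))"

definition symmetric_fun :: "nat \<Rightarrow> (real vec \<Rightarrow> real) \<Rightarrow> bool" where
  "symmetric_fun n P \<longleftrightarrow> (\<forall>x \<in> carrier_vec n. \<forall>a<n. \<forall>b<n.
      P (vec n (\<lambda>k. if k = a then x $ b else if k = b then x $ a else x $ k)) = P x)"

text \<open>Multistable regulatory system (conditions (2)-(4) and differentiability of l,g,h,P;
 condition (1), sigma > 0, is imposed separately).\<close>
definition msrs :: "nat \<Rightarrow> (real \<Rightarrow> real) \<Rightarrow> (real \<Rightarrow> real) \<Rightarrow> (real \<Rightarrow> real) \<Rightarrow> (real vec \<Rightarrow> real) \<Rightarrow> bool" where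
  "msrs n l g h P \<longleftrightarrow>
     (\<forall>z. l differentiable (at z) \<and> g differentiable (at z) \<and> h differentiable (at z)) \<and>
     (\<forall>x \<in> carrier_vec n. \<forall>j<n. partial_differentiable P j x) \<and>
     symmetric_fun n P \<and>
     (\<forall>x \<in> pos_vec n. \<forall>k<n. P x + h (x $ k) > 0) \<and>
     (\<forall>z>0. l z \<noteq> 0) \<and>
     (\<forall>\<sigma>>0. \<forall>z1 z2. extreme_point_on {0<..} (\<lambda>z. \<sigma> * g z / l z - h z) z1 \<and>
                    extreme_point_on {0<..} (\<lambda>z. \<sigma> * g z / l z - h z) z2 \<longrightarrow> z1 = z2)"

end

theory Submission
  imports Defs
begin


lemma prod_list_map_upt0: "prod_list (map f [0..<n]) = (\<Prod>i<n. f i)"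
  by (induct n) (auto simp: lessThan_Suc mult.commute)

lemma det_rank1:
  fixes e w v :: "nat \<Rightarrow> 'a::idom"
  shows "det (mat n n (\<lambda>(a,b). (if a = b then e a else 0) - w a * v b))
    = (\<Prod>a<n. e a) - (\<Sum>a<n. w a * v a * (\<Prod>b\<in>{..<n}-{a}. e b))"
proof (induction n)
  case 0
  then show ?case by (simp add: det_dim_zero)
next
  case (Suc n)
  define M where "M = (\<lambda>m. mat m m (\<lambda>(a,b). (if a = b then e a else 0) - w a * v b))"
  define a where "a = (\<lambda>i::nat. e n \<cdot>\<^sub>v unit_vec (Suc n) n)"
  define bb where "bb = (\<lambda>i::nat. vec (Suc n) (\<lambda>j. - w n * v j))"
  define c where "c = (\<lambda>i. row (M (Suc n)) i)"
  have Meq: "M (Suc n) = mat\<^sub>r (Suc n) (Suc n) (\<lambda>i. if i = n then a i + bb i else c i)"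
    by (rule eq_matI, auto simp: M_def a_def bb_def c_def)
  have split: "det (M (Suc n)) = det (mat\<^sub>r (Suc n) (Suc n) (\<lambda>i. if i = n then a i else c i))
     + det (mat\<^sub>r (Suc n) (Suc n) (\<lambda>i. if i = n then bb i else c i))"
    unfolding Meq by (rule det_row_add, auto simp: a_def bb_def c_def M_def)
  have B1: "mat\<^sub>r (Suc n) (Suc n) (\<lambda>i. if i = n then a i else c i)
     = four_block_mat (M n) (mat n 1 (\<lambda>(i,_). - w i * v n)) (0\<^sub>m 1 n) (mat 1 1 (\<lambda>_. e n))"
    by (rule eq_matI, auto simp: M_def a_def c_def less_Suc_eq)
  have d1: "det (mat\<^sub>r (Suc n) (Suc n) (\<lambda>i. if i = n then a i else c i)) = det (M n) * e n"
    unfolding B1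
    by (subst det_four_block_mat_lower_left_zero[of _ n _ 1], auto simp: M_def det_single)
  define Lf where "Lf = (\<lambda>i j. if i = j then (if i = n then - w n else 1) else if j = n then - w i else (0::'a))"
  define Uf where "Uf = (\<lambda>i j. if i = n then v j else if i = j then e i else (0::'a))"
  define L where "L = mat (Suc n) (Suc n) (\<lambda>(i,j). Lf i j)"
  define U where "U = mat (Suc n) (Suc n) (\<lambda>(i,j). Uf i j)"
  have sumLU: "(\<Sum>l\<in>{0..<n}. Lf i l * Uf l j) + Lf i n * Uf n j = (if i = n then - w n * v j else (if i = j then e i else 0) - w i * v j)"
    if "i < Suc n" "j < Suc n" for i j
  proof -
    have "(\<Sum>l\<in>{0..<n}. Lf i l * Uf l j) = (\<Sum>l\<in>{0..<n}. if l = i then Uf i j else 0)"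
      by (rule sum.cong, auto simp: Lf_def)
    also have "\<dots> = (if i < n then Uf i j else 0)" by (simp add: sum.delta')
    finally show ?thesis using that by (auto simp: Lf_def Uf_def less_Suc_eq)
  qed
  have B2: "mat\<^sub>r (Suc n) (Suc n) (\<lambda>i. if i = n then bb i else c i) = L * U"
    by (rule eq_matI, auto simp: L_def U_def bb_def c_def M_def scalar_prod_def sumLU)
  have dL: "det L = - w n"
  proof -
    have "det L = prod_list (diag_mat L)"
      by (rule det_upper_triangular, auto simp: upper_triangular_def L_def Lf_def)
    also have "\<dots> = (\<Prod>i<Suc n. Lf i i)"
      by (simp add: diag_mat_def L_def prod_list_map_upt0)
    also have "\<dots> = - w n" by (simp add: Lf_def)
    finally show ?thesis .
  qed
  have dU: "det U = (\<Prod>a<n. e a) * v n"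
  proof -
    have "det U = prod_list (diag_mat U)"
      by (rule det_lower_triangular[of "Suc n"], auto simp: U_def Uf_def)
    also have "\<dots> = (\<Prod>i<Suc n. Uf i i)"
      by (simp add: diag_mat_def U_def prod_list_map_upt0)
    also have "\<dots> = (\<Prod>a<n. e a) * v n" by (simp add: Uf_def mult.commute)
    finally show ?thesis .
  qed
  have d2: "det (mat\<^sub>r (Suc n) (Suc n) (\<lambda>i. if i = n then bb i else c i)) = - w n * ((\<Prod>a<n. e a) * v n)"
  proof -
    have C: "L \<in> carrier_mat (Suc n) (Suc n)" "U \<in> carrier_mat (Suc n) (Suc n)"
      by (auto simp: L_def U_def)
    show ?thesis unfolding B2 det_mult[OF C] dL dU ..
  qed
  have IH: "det (M n) = (\<Prod>a<n. e a) - (\<Sum>a<n. w a * v a * (\<Prod>b\<in>{..<n}-{a}. e b))"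
    using Suc.IH by (simp add: M_def)
  have pr: "(\<Prod>b\<in>{..<Suc n}-{a}. e b) = e n * (\<Prod>b\<in>{..<n}-{a}. e b)" if "a < n" for a
  proof -
    have "{..<Suc n}-{a} = insert n ({..<n}-{a})" using that by auto
    then show ?thesis by simp
  qed
  have lsm: "{..<Suc n} - {n} = {..<n}" by auto
  have "det (M (Suc n)) = det (M n) * e n - w n * v n * (\<Prod>a<n. e a)"
    using split d1 d2 by (simp add: algebra_simps)
  also have "\<dots> = (\<Prod>a<Suc n. e a) - (\<Sum>a<Suc n. w a * v a * (\<Prod>b\<in>{..<Suc n}-{a}. e b))"
    unfolding IH using lsm by (simp add: pr algebra_simps sum_distrib_left sum_distrib_right)
  finally show ?case by (simp add: M_def)
qed


lemma perm_P:
  assumes sym: "symmetric_fun n P" and pi: "\<pi> permutes {0..<n}"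
  shows "\<forall>x \<in> carrier_vec n. P (vec n (\<lambda>k. x $ \<pi> k)) = P x"
  using pi finite_atLeastLessThan
proof (induction rule: permutes_induct)
  case id
  show ?case by (auto intro!: arg_cong[where f=P] eq_vecI)
next
  case (swap a b p)
  show ?case
  proof
    fix x :: "real vec" assume x: "x \<in> carrier_vec n"
    define y where "y = vec n (\<lambda>k. if k = a then x $ b else if k = b then x $ a else x $ k)"
    have y: "y \<in> carrier_vec n" by (simp add: y_def)
    have Py: "P y = P x" using sym x swap(1,2) unfolding symmetric_fun_def y_def by auto
    have pn: "\<And>k. k < n \<Longrightarrow> p k < n" using swap permutes_in_image[of p "{0..<n}"] by auto
    have "vec n (\<lambda>k. x $ (Transposition.transpose a b \<circ> p) k) = vec n (\<lambda>k. y $ p k)"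
      using pn by (intro eq_vecI) (auto simp: y_def Transposition.transpose_def permutes_in_image)
    then show "P (vec n (\<lambda>k. x $ (Transposition.transpose a b \<circ> p) k)) = P x"
      using swap y Py by auto
  qed
qed

lemma perm_partial:
  assumes sym: "symmetric_fun n P" and pi: "\<pi> permutes {0..<n}" and x: "x \<in> carrier_vec n"
    and j: "j < n"
  shows "partial_vec P j (vec n (\<lambda>k. x $ \<pi> k)) = partial_vec P (\<pi> j) x"
proof -
  have pj: "\<pi> j < n" using pi j by (simp add: permutes_in_image)
  have "(\<lambda>t. P (vec n (\<lambda>m. if m = j then t else (vec n (\<lambda>k. x $ \<pi> k)) $ m)))
      = (\<lambda>t. P (vec n (\<lambda>m. if m = \<pi> j then t else x $ m)))"
  proof
    fix t
    define z where "z = vec n (\<lambda>m. if m = \<pi> j then t else x $ m)"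
    have "vec n (\<lambda>m. if m = j then t else (vec n (\<lambda>k. x $ \<pi> k)) $ m) = vec n (\<lambda>k. z $ \<pi> k)"
      using pi permutes_inj[OF pi] by (intro eq_vecI) (auto simp: z_def permutes_in_image inj_eq)
    then show "P (vec n (\<lambda>m. if m = j then t else (vec n (\<lambda>k. x $ \<pi> k)) $ m)) = P z"
      using perm_P[OF sym pi] by (simp add: z_def)
  qed
  then show ?thesis using x j pj unfolding partial_vec_def by simp
qed

lemma partial_swap_eq:
  fixes x :: "real vec"
  assumes sym: "symmetric_fun n P" and x: "x \<in> carrier_vec n"
    and a: "a < n" and b: "b < n" and ab: "x $ a = x $ b"
  shows "partial_vec P a x = partial_vec P b x"
proof -
  have pi: "Transposition.transpose a b permutes {0..<n}" using a b by (simp add: permutes_swap_id)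
  have "vec n (\<lambda>k. x $ Transposition.transpose a b k) = x"
    using x ab by (intro eq_vecI) (auto simp: Transposition.transpose_def)
  then show ?thesis using perm_partial[OF sym pi x a] by simp
qed

lemma partial_P_deriv:
  fixes x :: "real vec"
  assumes "partial_differentiable P j x"
  shows "((\<lambda>t. P (vec (dim_vec x) (\<lambda>m. if m = j then t else x $ m))) has_real_derivative partial_vec P j x) (at (x $ j))"
  using assms unfolding partial_differentiable_def partial_vec_def
  by (simp add: DERIV_deriv_iff_real_differentiable)

lemma msrs_diag:
  fixes x :: "real vec"
  assumes ms: "msrs n l g h P" and x: "x \<in> carrier_vec n" and k: "k < n"
    and nz: "P x + h (x $ k) \<noteq> 0"
  shows "partial_vec (msrs_f l g h P \<sigma> k) k x = - deriv l (x $ k) +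
     (\<sigma> * deriv g (x $ k) * (P x + h (x $ k)) - \<sigma> * g (x $ k) * (partial_vec P k x + deriv h (x $ k)))
      / ((P x + h (x $ k)) * (P x + h (x $ k)))"
proof -
  define Q where "Q = (\<lambda>t. P (vec n (\<lambda>m. if m = k then t else x $ m)))"
  have dimx: "dim_vec x = n" using x by simp
  have Qx: "Q (x $ k) = P x" unfolding Q_def
    by (rule arg_cong[where f=P], insert x, auto intro!: eq_vecI)
  have dQ: "(Q has_real_derivative partial_vec P k x) (at (x $ k))"
    using partial_P_deriv[of P k x] ms x k unfolding msrs_def Q_def dimx by auto
  have dl: "(l has_real_derivative deriv l (x $ k)) (at (x $ k))"
    and dg: "(g has_real_derivative deriv g (x $ k)) (at (x $ k))"
    and dh: "(h has_real_derivative deriv h (x $ k)) (at (x $ k))"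
    using ms unfolding msrs_def by (auto simp: DERIV_deriv_iff_real_differentiable)
  have nz': "Q (x $ k) + h (x $ k) \<noteq> 0" using nz Qx by simp
  have D: "((\<lambda>t. - l t + \<sigma> * g t / (Q t + h t)) has_real_derivative
     (- deriv l (x $ k) + (\<sigma> * deriv g (x $ k) * (Q (x $ k) + h (x $ k)) - \<sigma> * g (x $ k) * (partial_vec P k x + deriv h (x $ k)))
      / ((Q (x $ k) + h (x $ k)) * (Q (x $ k) + h (x $ k))))) (at (x $ k))"
    by (rule DERIV_add[OF DERIV_minus[OF dl] DERIV_divide[OF DERIV_cmult[OF dg] DERIV_add[OF dQ dh] nz']])
  have feq: "(\<lambda>t. msrs_f l g h P \<sigma> k (vec (dim_vec x) (\<lambda>m. if m = k then t else x $ m)))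
      = (\<lambda>t. - l t + \<sigma> * g t / (Q t + h t))"
    using k by (auto simp: msrs_f_def Q_def dimx)
  show ?thesis unfolding partial_vec_def[of "msrs_f l g h P \<sigma> k"] feq using DERIV_imp_deriv[OF D] Qx by simp
qed

lemma msrs_off:
  fixes x :: "real vec"
  assumes ms: "msrs n l g h P" and x: "x \<in> carrier_vec n" and k: "k < n" and j: "j < n" and jk: "j \<noteq> k"
    and nz: "P x + h (x $ k) \<noteq> 0"
  shows "partial_vec (msrs_f l g h P \<sigma> k) j x =
     - (\<sigma> * g (x $ k) * partial_vec P j x) / ((P x + h (x $ k)) * (P x + h (x $ k)))"
proof -
  define Q where "Q = (\<lambda>t. P (vec n (\<lambda>m. if m = j then t else x $ m)))"
  have dimx: "dim_vec x = n" using x by simp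
  have Qx: "Q (x $ j) = P x" unfolding Q_def
    by (rule arg_cong[where f=P], insert x, auto intro!: eq_vecI)
  have dQ: "(Q has_real_derivative partial_vec P j x) (at (x $ j))"
    using partial_P_deriv[of P j x] ms x j unfolding msrs_def Q_def dimx by auto
  have nz': "Q (x $ j) + h (x $ k) \<noteq> 0" using nz Qx by simp
  have D: "((\<lambda>t. - l (x $ k) + \<sigma> * g (x $ k) / (Q t + h (x $ k))) has_real_derivative
     (0 + (0 * (Q (x $ j) + h (x $ k)) - \<sigma> * g (x $ k) * (partial_vec P j x + 0))
      / ((Q (x $ j) + h (x $ k)) * (Q (x $ j) + h (x $ k))))) (at (x $ j))"
    by (rule DERIV_add[OF DERIV_const DERIV_divide[OF DERIV_const DERIV_add[OF dQ DERIV_const] nz']])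
  have feq: "(\<lambda>t. msrs_f l g h P \<sigma> k (vec (dim_vec x) (\<lambda>m. if m = j then t else x $ m)))
      = (\<lambda>t. - l (x $ k) + \<sigma> * g (x $ k) / (Q t + h (x $ k)))"
    using k jk by (auto simp: msrs_f_def Q_def dimx)
  show ?thesis unfolding partial_vec_def[of "msrs_f l g h P \<sigma> k"] feq using DERIV_imp_deriv[OF D] Qx by simp
qed



lemma alg:
  fixes i m :: nat and s \<beta> \<tau> \<gamma> \<xi> \<gamma>0 \<xi>0 \<mu> \<nu> :: real
  assumes "1 \<le> i" "1 \<le> m" "2 \<le> i \<Longrightarrow> \<gamma> = \<gamma>0" "2 \<le> m \<Longrightarrow> \<xi> = \<xi>0" "\<mu> * \<nu> = \<gamma>0 * \<xi>0"
  shows "(s - \<beta> + \<gamma>0)^i * (s - \<tau> + \<xi>0)^m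
     - (real i * (\<gamma>0 * ((s - \<beta> + \<gamma>0)^(i-1) * (s - \<tau> + \<xi>0)^m))
        + real m * (\<xi>0 * ((s - \<beta> + \<gamma>0)^i * (s - \<tau> + \<xi>0)^(m-1))))
   = (s - (\<tau> - \<xi>)) ^ (m - 1) * (s - (\<beta> - \<gamma>)) ^ (i - 1) *
     (s\<^sup>2 - (\<beta> + \<tau> + real (i - 1) * \<gamma> + real (m - 1) * \<xi>) * s +
      ((\<beta> + real (i - 1) * \<gamma>) * (\<tau> + real (m - 1) * \<xi>) - real i * real m * \<mu> * \<nu>))"
proof -
  obtain i' m' where im: "i = Suc i'" "m = Suc m'" using assms(1,2) by (metis Suc_le_D One_nat_def)
  define X where "X = s - \<beta> + \<gamma>0"
  define Y where "Y = s - \<tau> + \<xi>0"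
  have g1: "real i' * \<gamma> = real i' * \<gamma>0"
    using assms(3) im by (cases "i' = 0") auto
  have g2: "(s - (\<beta> - \<gamma>))^i' = X^i'"
    using assms(3) im unfolding X_def by (cases "i' = 0") (auto simp: algebra_simps)
  note g = g1 g2
  have x1: "real m' * \<xi> = real m' * \<xi>0"
    using assms(4) im by (cases "m' = 0") auto
  have x2: "(s - (\<tau> - \<xi>))^m' = Y^m'"
    using assms(4) im unfolding Y_def by (cases "m' = 0") (auto simp: algebra_simps)
  note x = x1 x2
  have mn: "real (Suc i') * real (Suc m') * \<mu> * \<nu> = real (Suc i') * real (Suc m') * (\<gamma>0 * \<xi>0)"
    using assms(5) by (simp add: mult.assoc)
  have L: "X^i * Y^m - (real i * (\<gamma>0 * (X^(i-1) * Y^m)) + real m * (\<xi>0 * (X^i * Y^(m-1))))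
     = Y^m' * X^i' * (X * Y - (real i' + 1) * \<gamma>0 * Y - (real m' + 1) * \<xi>0 * X)"
    unfolding im by (simp add: algebra_simps)
  have Q: "X * Y - (real i' + 1) * \<gamma>0 * Y - (real m' + 1) * \<xi>0 * X =
      s\<^sup>2 - (\<beta> + \<tau> + real i' * \<gamma>0 + real m' * \<xi>0) * s +
      ((\<beta> + real i' * \<gamma>0) * (\<tau> + real m' * \<xi>0) - real (Suc i') * real (Suc m') * (\<gamma>0 * \<xi>0))"
    unfolding X_def Y_def power2_eq_square of_nat_Suc by (simp add: algebra_simps)
  show ?thesis
    unfolding X_def[symmetric] Y_def[symmetric] L Q
    unfolding im diff_Suc_1 g x mn ..
qed



theorem theorem4:
  fixes n i :: nat and l g h :: "real \<Rightarrow> real" and P :: "real vec \<Rightarrow> real"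
    and \<sigma> p q :: real and r :: "real vec"
  assumes "n \<ge> 2"
    and "msrs n l g h P"
    and "\<sigma> > 0"
    and "r \<in> pos_vec n"
    and "\<forall>k<n. msrs_f l g h P \<sigma> k r = 0"
    and "p \<noteq> q"
    and "1 \<le> i" and "i \<le> n div 2"
    and "card {k. k < n \<and> r $ k = p} = i"
    and "card {k. k < n \<and> r $ k = q} = n - i"
  shows "let \<rho> = vec n (\<lambda>k. if k < i then p else q);
             D = (\<lambda>k x. - (P x + h (x $ k)) / l (x $ k));
             \<beta> = partial_vec (msrs_f l g h P \<sigma> 0) 0 \<rho>;
             \<tau> = partial_vec (msrs_f l g h P \<sigma> (n - 1)) (n - 1) \<rho>;
             \<gamma> = partial_vec P 1 \<rho> / D 0 \<rho>;
             \<xi> = partial_vec P (n - 2) \<rho> / D (n - 1) \<rho>;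
             \<mu> = partial_vec P (n - 1) \<rho> / D 0 \<rho>;
             \<nu> = partial_vec P 0 \<rho> / D (n - 1) \<rho>;
             G1 = \<tau> - \<xi>;
             G2 = \<beta> - \<gamma>;
             G3 = \<beta> + \<tau> + real (i - 1) * \<gamma> + real (n - i - 1) * \<xi>;
             G4 = (\<beta> + real (i - 1) * \<gamma>) * (\<tau> + real (n - i - 1) * \<xi>)
                  - real i * real (n - i) * \<mu> * \<nu>
         in \<forall>s::real. det (s \<cdot>\<^sub>m 1\<^sub>m n - jacobian n (\<lambda>k. msrs_f l g h P \<sigma> k) r)
              = (s - G1) ^ (n - i - 1) * (s - G2) ^ (i - 1) * (s\<^sup>2 - G3 * s + G4)"
proof -
  note ms = assms(2)
  have rc: "r \<in> carrier_vec n" and rpos: "\<And>k. k < n \<Longrightarrow> r $ k > 0"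
    using assms(4) by (auto simp: pos_vec_def)
  have sym: "symmetric_fun n P" using ms by (simp add: msrs_def)
  have Ppos: "\<And>x k. x \<in> pos_vec n \<Longrightarrow> k < n \<Longrightarrow> P x + h (x $ k) > 0" using ms by (simp add: msrs_def)
  have lnz: "\<And>z. z > 0 \<Longrightarrow> l z \<noteq> 0" using ms by (simp add: msrs_def)
  have iln: "i \<le> n" "i < n" "i \<le> n - 1" "1 \<le> n - i" using assms(1,8) by auto
  define Sp where "Sp = {k. k < n \<and> r $ k = p}"
  define Sq where "Sq = {k. k < n \<and> r $ k = q}"
  have cSp: "card Sp = i" and cSq: "card Sq = n - i" using assms(9,10) by (simp_all add: Sp_def Sq_def)
  have fSp: "finite Sp" and fSq: "finite Sq" by (auto simp: Sp_def Sq_def)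
  have disj: "Sp \<inter> Sq = {}" using assms(6) by (auto simp: Sp_def Sq_def)
  have sub: "Sp \<union> Sq \<subseteq> {0..<n}" by (auto simp: Sp_def Sq_def)
  have "card (Sp \<union> Sq) = n" using card_Un_disjoint[OF fSp fSq disj] cSp cSq iln by simp
  hence un: "Sp \<union> Sq = {0..<n}" using card_subset_eq[OF _ sub] by simp
  have pq: "r $ k = p \<or> r $ k = q" if "k < n" for k
  proof -
    have "k \<in> Sp \<union> Sq" using un that by auto
    then show ?thesis by (auto simp: Sp_def Sq_def)
  qed
  have "Sp \<noteq> {}" using cSp assms(7) by auto
  then obtain k0 where "k0 \<in> Sp" by auto
  hence ppos: "p > 0" using rpos by (auto simp: Sp_def)
  have "Sq \<noteq> {}" using cSq iln by auto
  then obtain k1 where "k1 \<in> Sq" by auto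
  hence qpos: "q > 0" using rpos by (auto simp: Sq_def)
  obtain f1 where f1: "bij_betw f1 {0..<i} Sp" using finite_same_card_bij[of "{0..<i}" Sp] cSp fSp by auto
  obtain f2 where f2: "bij_betw f2 {i..<n} Sq" using finite_same_card_bij[of "{i..<n}" Sq] cSq fSq by auto
  define \<pi> where "\<pi> = (\<lambda>k. if k < i then f1 k else if k < n then f2 k else k)"
  have b1: "bij_betw \<pi> {0..<i} Sp" using f1 by (rule bij_betw_cong[THEN iffD2, rotated]) (auto simp: \<pi>_def)
  have b2: "bij_betw \<pi> {i..<n} Sq" using f2 by (rule bij_betw_cong[THEN iffD2, rotated]) (auto simp: \<pi>_def)
  have "bij_betw \<pi> ({0..<i} \<union> {i..<n}) (Sp \<union> Sq)" by (rule bij_betw_combine[OF b1 b2 disj])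
  moreover have "{0..<i} \<union> {i..<n} = {0..<n}" using iln by auto
  ultimately have "bij_betw \<pi> {0..<n} {0..<n}" using un by simp
  hence perm: "\<pi> permutes {0..<n}" by (rule bij_imp_permutes) (insert iln, auto simp: \<pi>_def)
  define \<rho> where "\<rho> = vec n (\<lambda>k. if k < i then p else q)"
  have rho: "vec n (\<lambda>k. r $ \<pi> k) = \<rho>"
  proof (rule eq_vecI)
    fix k assume "k < dim_vec \<rho>"
    hence k: "k < n" by (simp add: \<rho>_def)
    show "vec n (\<lambda>k. r $ \<pi> k) $ k = \<rho> $ k"
    proof (cases "k < i")
      case True
      then have "\<pi> k \<in> Sp" using b1 by (auto simp: bij_betw_def)
      then show ?thesis using k True by (simp add: \<rho>_def Sp_def)
    next
      case False
      then have "\<pi> k \<in> Sq" using b2 k by (auto simp: bij_betw_def)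
      then show ?thesis using k False by (simp add: \<rho>_def Sq_def)
    qed
  qed (simp add: \<rho>_def)
  have \<rho>c: "\<rho> \<in> carrier_vec n" by (simp add: \<rho>_def)
  have \<rho>pos: "\<rho> \<in> pos_vec n" using ppos qpos by (auto simp: \<rho>_def pos_vec_def)
  have \<rho>0: "\<rho> $ 0 = p" and \<rho>n: "\<rho> $ (n - 1) = q" using iln assms(1,7) by (auto simp: \<rho>_def)
  define Pr where "Pr = P r"
  have P\<rho>: "P \<rho> = Pr" using perm_P[OF sym perm] rc rho by (auto simp: Pr_def)
  define ap where "ap = partial_vec P 0 \<rho>"
  define aq where "aq = partial_vec P (n - 1) \<rho>"
  define A where "A = (\<lambda>z. if z = p then ap else aq)"
  have pp\<rho>: "partial_vec P j \<rho> = (if j < i then ap else aq)" if "j < n" for j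
  proof (cases "j < i")
    case True
    then show ?thesis using partial_swap_eq[OF sym \<rho>c that, of 0] that iln assms(7)
      by (auto simp: ap_def \<rho>_def)
  next
    case False
    then show ?thesis using partial_swap_eq[OF sym \<rho>c that, of "n - 1"] that iln
      by (auto simp: aq_def \<rho>_def)
  qed
  have ppr: "partial_vec P k r = A (r $ k)" if k: "k < n" for k
  proof -
    define j where "j = inv_into UNIV \<pi> k"
    have j: "j < n" "\<pi> j = k" using perm k unfolding j_def
      by (auto simp: permutes_inverses permutes_in_image[OF permutes_inv[OF perm]])
    have "partial_vec P j \<rho> = partial_vec P k r"
      using perm_partial[OF sym perm rc j(1)] rho j by simp
    moreover have "\<rho> $ j = r $ k" using rho j by (metis index_vec)
    ultimately show ?thesis using pp\<rho>[OF j(1)] assms(6) pq[OF k]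
      by (auto simp: A_def \<rho>_def j split: if_splits)
  qed
  define dd where "dd = (\<lambda>z. - deriv l z +
     (\<sigma> * deriv g z * (Pr + h z) - \<sigma> * g z * (A z + deriv h z)) / ((Pr + h z) * (Pr + h z)))"
  define W where "W = (\<lambda>z. 1 / (- (Pr + h z) / l z))"
  have rpos': "\<And>k. k < n \<Longrightarrow> Pr + h (r $ k) > 0" using Ppos[OF assms(4)] by (simp add: Pr_def)
  have Jd: "partial_vec (msrs_f l g h P \<sigma> k) k r = dd (r $ k)" if k: "k < n" for k
    using msrs_diag[OF ms rc k, of \<sigma>] rpos'[OF k] ppr[OF k] by (simp add: dd_def Pr_def)
  have Jo: "partial_vec (msrs_f l g h P \<sigma> a) b r = W (r $ a) * A (r $ b)"
    if a: "a < n" and b: "b < n" and ab: "b \<noteq> a" for a b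
  proof -
    have pos: "Pr + h (r $ a) > 0" using rpos'[OF a] .
    have lz: "l (r $ a) \<noteq> 0" using lnz rpos[OF a] by auto
    have eq: "\<sigma> * g (r $ a) / (Pr + h (r $ a)) = l (r $ a)"
      using assms(5) a by (simp add: msrs_f_def Pr_def)
    have "partial_vec (msrs_f l g h P \<sigma> a) b r = - (\<sigma> * g (r $ a) * A (r $ b)) / ((Pr + h (r $ a)) * (Pr + h (r $ a)))"
      using msrs_off[OF ms rc a b ab, of \<sigma>] pos ppr[OF b] by (simp add: Pr_def)
    also have "\<dots> = - (\<sigma> * g (r $ a) / (Pr + h (r $ a))) * A (r $ b) / (Pr + h (r $ a))"
      by (simp add: field_simps)
    also have "\<dots> = W (r $ a) * A (r $ b)" unfolding eq W_def using pos lz by (simp add: field_simps)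
    finally show ?thesis .
  qed
  have prodT: "(\<Prod>b\<in>T. F (r $ b)) = F p ^ card (T \<inter> Sp) * F q ^ card (T \<inter> Sq)"
    if T: "T \<subseteq> {0..<n}" for T and F :: "real \<Rightarrow> real"
  proof -
    have Tu: "T = (T \<inter> Sp) \<union> (T \<inter> Sq)" using T un by auto
    have fT: "finite (T \<inter> Sp)" "finite (T \<inter> Sq)" using fSp fSq by auto
    have "(\<Prod>b\<in>T. F (r $ b)) = (\<Prod>b\<in>T \<inter> Sp. F (r $ b)) * (\<Prod>b\<in>T \<inter> Sq. F (r $ b))"
      by (subst Tu, rule prod.union_disjoint[OF fT], insert disj, auto)
    also have "(\<Prod>b\<in>T \<inter> Sp. F (r $ b)) = (\<Prod>b\<in>T \<inter> Sp. F p)" by (rule prod.cong, auto simp: Sp_def)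
    also have "(\<Prod>b\<in>T \<inter> Sq. F (r $ b)) = (\<Prod>b\<in>T \<inter> Sq. F q)" by (rule prod.cong, auto simp: Sq_def)
    finally show ?thesis by simp
  qed
  have main: "det (s \<cdot>\<^sub>m 1\<^sub>m n - jacobian n (\<lambda>k. msrs_f l g h P \<sigma> k) r) =
     (s - dd p + W p * A p)^i * (s - dd q + W q * A q)^(n-i)
     - (real i * (W p * A p * ((s - dd p + W p * A p)^(i-1) * (s - dd q + W q * A q)^(n-i)))
        + real (n-i) * (W q * A q * ((s - dd p + W p * A p)^i * (s - dd q + W q * A q)^(n-i-1))))" for s
  proof -
    define E where "E = (\<lambda>z. s - dd z + W z * A z)"
    have Meq: "s \<cdot>\<^sub>m 1\<^sub>m n - jacobian n (\<lambda>k. msrs_f l g h P \<sigma> k) r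
       = mat n n (\<lambda>(a,b). (if a = b then E (r $ a) else 0) - W (r $ a) * A (r $ b))"
    proof (rule eq_matI)
      fix a b assume ab: "a < dim_row (mat n n (\<lambda>(a,b). (if a = b then E (r $ a) else 0) - W (r $ a) * A (r $ b)))"
         "b < dim_col (mat n n (\<lambda>(a,b). (if a = b then E (r $ a) else 0) - W (r $ a) * A (r $ b)))"
      hence a: "a < n" and b: "b < n" by auto
      show "(s \<cdot>\<^sub>m 1\<^sub>m n - jacobian n (\<lambda>k. msrs_f l g h P \<sigma> k) r) $$ (a, b) =
         mat n n (\<lambda>(a,b). (if a = b then E (r $ a) else 0) - W (r $ a) * A (r $ b)) $$ (a, b)"
      proof (cases "a = b")
        case True
        then show ?thesis using a Jd[OF a] by (simp add: jacobian_def E_def)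
      next
        case False
        then show ?thesis using a b Jo[OF a b] by (simp add: jacobian_def)
      qed
    qed (auto simp: jacobian_def)
    have d: "det (s \<cdot>\<^sub>m 1\<^sub>m n - jacobian n (\<lambda>k. msrs_f l g h P \<sigma> k) r)
       = (\<Prod>a<n. E (r $ a)) - (\<Sum>a<n. W (r $ a) * A (r $ a) * (\<Prod>b\<in>{..<n}-{a}. E (r $ b)))"
      unfolding Meq by (rule det_rank1)
    have n0: "{..<n} = {0..<n}" by auto
    have subs: "{..<n}-{a} \<subseteq> {0..<n}" for a by auto
    have P1: "(\<Prod>a<n. E (r $ a)) = E p ^ i * E q ^ (n - i)"
    proof -
      have "{0..<n} \<inter> Sp = Sp" "{0..<n} \<inter> Sq = Sq" using un by auto
      then show ?thesis using prodT[of "{..<n}" E] cSp cSq unfolding n0 by simp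
    qed
    have c1: "card ((\<lambda>x. x) ({..<n}-{a}) \<inter> Sp) = i - 1" "card (({..<n}-{a}) \<inter> Sq) = n - i"
      if "a \<in> Sp" for a
    proof -
      have "({..<n}-{a}) \<inter> Sp = Sp - {a}" "({..<n}-{a}) \<inter> Sq = Sq" using that disj by (auto simp: Sp_def Sq_def)
      then show "card ((\<lambda>x. x) ({..<n}-{a}) \<inter> Sp) = i - 1" "card (({..<n}-{a}) \<inter> Sq) = n - i"
        using that fSp cSp cSq by auto
    qed
    have c2: "card (({..<n}-{a}) \<inter> Sp) = i" "card (({..<n}-{a}) \<inter> Sq) = n - i - 1"
      if "a \<in> Sq" for a
    proof -
      have "({..<n}-{a}) \<inter> Sp = Sp" "({..<n}-{a}) \<inter> Sq = Sq - {a}" using that disj by (auto simp: Sp_def Sq_def)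
      then show "card (({..<n}-{a}) \<inter> Sp) = i" "card (({..<n}-{a}) \<inter> Sq) = n - i - 1"
        using that fSq cSp cSq by auto
    qed
    have "(\<Sum>a<n. W (r $ a) * A (r $ a) * (\<Prod>b\<in>{..<n}-{a}. E (r $ b)))
       = (\<Sum>a\<in>Sp. W (r $ a) * A (r $ a) * (\<Prod>b\<in>{..<n}-{a}. E (r $ b)))
         + (\<Sum>a\<in>Sq. W (r $ a) * A (r $ a) * (\<Prod>b\<in>{..<n}-{a}. E (r $ b)))"
      unfolding n0 un[symmetric] by (rule sum.union_disjoint[OF fSp fSq disj])
    also have "(\<Sum>a\<in>Sp. W (r $ a) * A (r $ a) * (\<Prod>b\<in>{..<n}-{a}. E (r $ b)))
        = (\<Sum>a\<in>Sp. W p * A p * (E p ^ (i - 1) * E q ^ (n - i)))"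
    proof (rule sum.cong[OF refl])
      fix a assume a: "a \<in> Sp"
      have "(\<Prod>b\<in>{..<n}-{a}. E (r $ b)) = E p ^ (i - 1) * E q ^ (n - i)"
        using prodT[of "{..<n}-{a}" E, OF subs] c1[OF a] by simp
      then show "W (r $ a) * A (r $ a) * (\<Prod>b\<in>{..<n}-{a}. E (r $ b)) = W p * A p * (E p ^ (i - 1) * E q ^ (n - i))"
        using a by (simp add: Sp_def)
    qed
    also have "(\<Sum>a\<in>Sq. W (r $ a) * A (r $ a) * (\<Prod>b\<in>{..<n}-{a}. E (r $ b)))
        = (\<Sum>a\<in>Sq. W q * A q * (E p ^ i * E q ^ (n - i - 1)))"
    proof (rule sum.cong[OF refl])
      fix a assume a: "a \<in> Sq"
      have "(\<Prod>b\<in>{..<n}-{a}. E (r $ b)) = E p ^ i * E q ^ (n - i - 1)"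
        using prodT[of "{..<n}-{a}" E, OF subs] c2[OF a] by simp
      then show "W (r $ a) * A (r $ a) * (\<Prod>b\<in>{..<n}-{a}. E (r $ b)) = W q * A q * (E p ^ i * E q ^ (n - i - 1))"
        using a by (simp add: Sq_def)
    qed
    finally have S: "(\<Sum>a<n. W (r $ a) * A (r $ a) * (\<Prod>b\<in>{..<n}-{a}. E (r $ b)))
       = real i * (W p * A p * (E p ^ (i - 1) * E q ^ (n - i)))
         + real (n - i) * (W q * A q * (E p ^ i * E q ^ (n - i - 1)))"
      using cSp cSq by simp
    show ?thesis unfolding d P1 S by (simp add: E_def)
  qed
  have n1: "n - 1 < n" "0 < n" "1 < n" "n - 2 < n" using assms(1) by auto
  have Ap: "A p = ap" and Aq: "A q = aq" using assms(6) by (auto simp: A_def)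
  have hb: "partial_vec (msrs_f l g h P \<sigma> 0) 0 \<rho> = dd p"
    using msrs_diag[OF ms \<rho>c n1(2), of \<sigma>] Ppos[OF \<rho>pos n1(2)] \<rho>0 P\<rho> Ap
    by (simp add: dd_def ap_def)
  have ht: "partial_vec (msrs_f l g h P \<sigma> (n - 1)) (n - 1) \<rho> = dd q"
    using msrs_diag[OF ms \<rho>c n1(1), of \<sigma>] Ppos[OF \<rho>pos n1(1)] \<rho>n P\<rho> Aq
    by (simp add: dd_def aq_def)
  define \<gamma>v where "\<gamma>v = (if 1 < i then A p else A q) * W p"
  define \<xi>v where "\<xi>v = (if n - 2 < i then A p else A q) * W q"
  have hg: "partial_vec P 1 \<rho> / (- (P \<rho> + h (\<rho> $ 0)) / l (\<rho> $ 0)) = \<gamma>v"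
    using pp\<rho>[OF n1(3)] \<rho>0 P\<rho> Ap Aq by (simp add: \<gamma>v_def W_def)
  have hx: "partial_vec P (n - 2) \<rho> / (- (P \<rho> + h (\<rho> $ (n - 1))) / l (\<rho> $ (n - 1))) = \<xi>v"
    using pp\<rho>[OF n1(4)] \<rho>n P\<rho> Ap Aq by (simp add: \<xi>v_def W_def)
  have hm: "partial_vec P (n - 1) \<rho> / (- (P \<rho> + h (\<rho> $ 0)) / l (\<rho> $ 0)) = A q * W p"
    using \<rho>0 P\<rho> Aq by (simp add: aq_def W_def)
  have hn: "partial_vec P 0 \<rho> / (- (P \<rho> + h (\<rho> $ (n - 1))) / l (\<rho> $ (n - 1))) = A p * W q"
    using \<rho>n P\<rho> Ap by (simp add: ap_def W_def)
  have cg: "\<gamma>v = W p * A p" if "2 \<le> i" using that by (simp add: \<gamma>v_def)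
  have cx: "\<xi>v = W q * A q" if "2 \<le> n - i" using that by (auto simp: \<xi>v_def)
  have cmn: "(A q * W p) * (A p * W q) = (W p * A p) * (W q * A q)" by simp
  show ?thesis
    unfolding Let_def \<rho>_def[symmetric] hb ht hg hx hm hn
  proof
    fix s
    show "det (s \<cdot>\<^sub>m 1\<^sub>m n - jacobian n (\<lambda>k. msrs_f l g h P \<sigma> k) r) =
      (s - (dd q - \<xi>v)) ^ (n - i - 1) * (s - (dd p - \<gamma>v)) ^ (i - 1) *
      (s\<^sup>2 - (dd p + dd q + real (i - 1) * \<gamma>v + real (n - i - 1) * \<xi>v) * s +
       ((dd p + real (i - 1) * \<gamma>v) * (dd q + real (n - i - 1) * \<xi>v) - real i * real (n - i) * (A q * W p) * (A p * W q)))"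
      unfolding main by (rule alg[OF assms(7) iln(4) cg cx cmn])
  qed
qed

end
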